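(* Let $r$ and $d$ be positive integers, let $\operatorname{Tv}(d,r)=(d+1)(r-1)+1$, and let $S$ be a set of $n>\operatorname{Tv}(d,r)$ points in $\mathbb{R}^d$. Then every vertex $v$ of the Tverberg $r$-partition graph $G_T[S,r]$ satisfies \[\big(n+1-\operatorname{Tv}(d,r)\big)(r-1)\le \deg(v)\le n(r-1).\]
   Context: A partition of a finite set $S$ into $r$ parts is a collection of $r$ nonempty pairwise disjoint subsets $P_1,\dots,P_r$ (unordered) whose union is $S$. For a finite $S\subset\mathbb{R}^d$, a Tverberg partition of $S$ into $r$ parts is a partition $P_1,\dots,P_r$ of $S$ into $r$ parts with $\bigcap_{j=1}^r\operatorname{conv}(P_j)\neq\emptyset$. For two partitions $P,P'$ of $S$, the partition distance $D(P,P')$ is the minimum number of elements of $S$ that must be removed so that $P$ and $P'$ restricted to the remaining elements coincide. The Tverberg $r$-partition graph $G_T[S,r]$ has as vertices all Tverberg partitions of $S$ into $r$ parts, with an edge between $P$ and $P'$ if and only if $D(P,P')=1$. *)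

theory Defs
  imports "HOL-Analysis.Analysis" "HOL-Library.Disjoint_Sets"
begin

definition partition_r :: "'a set \<Rightarrow> nat \<Rightarrow> 'a set set \<Rightarrow> bool" where
  "partition_r S r P \<longleftrightarrow> partition_on S P \<and> finite P \<and> card P = r"

definition tverberg_partition :: "(real^'d) set \<Rightarrow> nat \<Rightarrow> (real^'d) set set \<Rightarrow> bool" where
  "tverberg_partition S r P \<longleftrightarrow> partition_r S r P \<and> (\<Inter>B\<in>P. convex hull B) \<noteq> {}"

definition restrict_partition :: "'a set set \<Rightarrow> 'a set \<Rightarrow> 'a set set" where
  "restrict_partition P Y = {B \<inter> Y | B. B \<in> P} - {{}}"

definition partition_distance :: "'a set \<Rightarrow> 'a set set \<Rightarrow> 'a set set \<Rightarrow> nat" where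
  "partition_distance S P P' =
     Min {card X | X. X \<subseteq> S \<and> restrict_partition P (S - X) = restrict_partition P' (S - X)}"

definition tverberg_graph_degree :: "(real^'d) set \<Rightarrow> nat \<Rightarrow> (real^'d) set set \<Rightarrow> nat" where
  "tverberg_graph_degree S r P =
     card {P'. tverberg_partition S r P' \<and> partition_distance S P P' = 1}"

definition Tv :: "nat \<Rightarrow> nat \<Rightarrow> nat" where
  "Tv d r = (d + 1) * (r - 1) + 1"

end

theory Submission
  imports Defs "HOL-Library.Function_Algebras"
begin

definition scl :: "real \<Rightarrow> ('i \<Rightarrow> 'v::real_vector) \<Rightarrow> ('i \<Rightarrow> 'v)" where
  "scl c f = (\<lambda>x. c *\<^sub>R f x)"

lemma vs_fun: "vector_space (scl :: real \<Rightarrow> ('i \<Rightarrow> 'v::real_vector) \<Rightarrow> _)"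
  by unfold_locales (auto simp: scl_def fun_eq_iff algebra_simps)

lemma sum_apply_fun: "(sum f A) x = sum (\<lambda>a. f a x) A"
  by (induction A rule: infinite_finite_induct) auto

lemma dep_family:
  fixes v :: "'a \<Rightarrow> 'i \<Rightarrow> 'v::real_vector"
  assumes T: "finite T" and U: "finite U" and c: "card U > card T"
    and sp: "\<And>y. y \<in> U \<Longrightarrow> v y \<in> module.span scl T"
  shows "\<exists>w. (\<exists>y\<in>U. w y \<noteq> 0) \<and> (\<Sum>y\<in>U. scl (w y) (v y)) = 0"
proof (cases "inj_on v U")
  case False
  then obtain y1 y2 where y: "y1 \<in> U" "y2 \<in> U" "y1 \<noteq> y2" "v y1 = v y2"
    unfolding inj_on_def by blast
  define w where "w = (\<lambda>y. if y = y1 then (1::real) else if y = y2 then -1 else 0)"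
  have "(\<Sum>y\<in>U. scl (w y) (v y)) = (\<Sum>y\<in>{y1,y2}. scl (w y) (v y))"
    by (rule sum.mono_neutral_right) (use U y in \<open>auto simp: w_def scl_def fun_eq_iff\<close>)
  also have "\<dots> = 0" using y by (simp add: w_def scl_def fun_eq_iff)
  finally show ?thesis using y by (auto simp: w_def intro!: exI[of _ w])
next
  case True
  have vs: "vector_space (scl :: real \<Rightarrow> ('i \<Rightarrow> 'v) \<Rightarrow> _)" by (rule vs_fun)
  have ms: "module (scl :: real \<Rightarrow> ('i \<Rightarrow> 'v) \<Rightarrow> _)" using vs by (simp add: module_iff_vector_space)
  have "\<not> module.independent scl (v ` U)"
  proof
    assume ind: "module.independent scl (v ` U)"
    have "v ` U \<subseteq> module.span scl T" using sp by auto
    from vector_space.independent_span_bound[OF vs T ind this]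
    have "card (v ` U) \<le> card T" by simp
    with card_image[OF True] c show False by simp
  qed
  then have "module.dependent scl (v ` U)" by simp
  with module.dependent_finite[OF ms] U obtain u where
    u: "\<exists>z\<in>v ` U. u z \<noteq> 0" "(\<Sum>z\<in>v ` U. scl (u z) z) = 0" by auto
  have "(\<Sum>y\<in>U. scl (u (v y)) (v y)) = 0"
    using u(2) by (simp add: sum.reindex[OF True])
  then show ?thesis using u(1) by (auto intro!: exI[of _ "\<lambda>y. u (v y)"])
qed

definition dl :: "'i \<Rightarrow> 'v \<Rightarrow> 'i \<Rightarrow> 'v::real_vector" where
  "dl D b = (\<lambda>E. if E = D then b else 0)"

lemma dl_span:
  fixes P :: "'i set" and f :: "'i \<Rightarrow> 'e::euclidean_space"
  assumes P: "finite P" and D0: "D0 \<in> P"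
    and out: "\<And>E. E \<notin> P \<Longrightarrow> f E = 0"
    and f0: "f D0 = c *\<^sub>R z"
  shows "f \<in> module.span scl (insert (dl D0 z) ((\<lambda>(D,b). dl D b) ` ((P - {D0}) \<times> Basis)))"
proof -
  let ?T = "insert (dl D0 z) ((\<lambda>(D,b). dl D b) ` ((P - {D0}) \<times> Basis))"
  have ms: "module (scl :: real \<Rightarrow> ('i \<Rightarrow> 'e) \<Rightarrow> _)" using vs_fun by (simp add: module_iff_vector_space)
  have dlD: "dl D y \<in> module.span scl ?T" if "D \<in> P - {D0}" for D y
  proof -
    have "dl D y = (\<Sum>b\<in>Basis. scl (y \<bullet> b) (dl D b))"
      by (auto simp: fun_eq_iff sum_apply_fun scl_def dl_def euclidean_representation)
    also have "\<dots> \<in> module.span scl ?T"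
      by (intro module.span_sum[OF ms] module.span_scale[OF ms] module.span_base[OF ms])
         (use that in auto)
    finally show ?thesis .
  qed
  have "f = (\<Sum>D\<in>P - {D0}. dl D (f D)) + scl c (dl D0 z)"
  proof (rule ext)
    fix E
    show "f E = ((\<Sum>D\<in>P - {D0}. dl D (f D)) + scl c (dl D0 z)) E"
    proof (cases "E \<in> P - {D0}")
      case True
      have "(\<Sum>D\<in>P - {D0}. dl D (f D) E) = (\<Sum>D\<in>{E}. dl D (f D) E)"
        by (rule sum.mono_neutral_right) (use True P in \<open>auto simp: dl_def\<close>)
      then show ?thesis using True by (simp add: sum_apply_fun scl_def dl_def)
    next
      case False
      have "(\<Sum>D\<in>P - {D0}. dl D (f D) E) = 0"
        by (rule sum.neutral) (use False in \<open>auto simp: dl_def\<close>)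
      moreover have "((\<Sum>D\<in>P - {D0}. dl D (f D)) + scl c (dl D0 z)) E = (\<Sum>D\<in>P - {D0}. dl D (f D) E) + c *\<^sub>R (if E = D0 then z else 0)"
        by (simp add: sum_apply_fun scl_def dl_def)
      ultimately show ?thesis using False out f0 by auto
    qed
  qed
  also have "\<dots> \<in> module.span scl ?T"
  proof (rule module.span_add[OF ms])
    show "(\<Sum>D\<in>P - {D0}. dl D (f D)) \<in> module.span scl ?T"
      by (rule module.span_sum[OF ms]) (rule dlD)
    show "scl c (dl D0 z) \<in> module.span scl ?T"
      by (rule module.span_scale[OF ms]) (rule module.span_base[OF ms], simp)
  qed
  finally show ?thesis .
qed

lemma key:
  fixes P :: "(real^'d) set set" and U :: "(real^'d) set"
  assumes P: "finite P" and D0: "D0 \<in> P" and U: "finite U"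
    and c: "card U > (card P - 1) * (CARD('d) + 1) + 1"
  shows "\<exists>w. (\<exists>y\<in>U. w y \<noteq> 0) \<and> (\<forall>D\<in>P. (\<Sum>y\<in>U\<inter>D. w y) = 0)
     \<and> (\<forall>D\<in>P. (\<Sum>y\<in>U\<inter>D. w y *\<^sub>R y) = (\<Sum>y\<in>U\<inter>D0. w y *\<^sub>R y))"
proof -
  define ind where "ind = (\<lambda>y (D::(real^'d) set). if y \<in> D then (1::real) else 0)"
  define v where "v = (\<lambda>y (D::(real^'d) set).
     if D \<in> P \<and> D \<noteq> D0 then (ind y D - ind y D0) *\<^sub>R (y, 1::real)
     else if D = D0 then ind y D0 *\<^sub>R (0::real^'d, 1::real) else 0)"
  define T where "T = insert (dl D0 (0::real^'d, 1::real)) ((\<lambda>(D,b). dl D b) ` ((P - {D0}) \<times> (Basis :: ((real^'d) \<times> real) set)))"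
  have fT: "finite T" unfolding T_def using P by auto
  have "card T \<le> card ((\<lambda>(D,b). dl D b) ` ((P - {D0}) \<times> (Basis :: ((real^'d) \<times> real) set))) + 1"
    unfolding T_def using P by (simp add: card_insert_if finite_cartesian_product)
  also have "\<dots> \<le> card ((P - {D0}) \<times> (Basis :: ((real^'d) \<times> real) set)) + 1"
    by (intro add_right_mono card_image_le) (use P in simp)
  also have "\<dots> = (card P - 1) * (CARD('d) + 1) + 1"
    using P D0 by (simp add: card_cartesian_product)
  finally have cT: "card T < card U" using c by simp
  have sp: "v y \<in> module.span scl T" for y
  proof -
    have o: "v y E = 0" if "E \<notin> P" for E using that D0 unfolding v_def by auto
    have z: "v y D0 = ind y D0 *\<^sub>R (0::real^'d, 1::real)" unfolding v_def by simp
    show ?thesis unfolding T_def by (rule dl_span[where f="v y" and c="ind y D0" and z="(0::real^'d, 1::real)", OF P D0 o z])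
  qed
  have "\<exists>w. (\<exists>y\<in>U. w y \<noteq> 0) \<and> (\<Sum>y\<in>U. scl (w y) (v y)) = 0"
    by (rule dep_family[OF fT U cT, of v]) (rule sp)
  then obtain w where
    w: "\<exists>y\<in>U. w y \<noteq> 0" "(\<Sum>y\<in>U. scl (w y) (v y)) = 0" by blast
  have ev: "(\<Sum>y\<in>U. w y *\<^sub>R v y D) = 0" for D
    using fun_cong[OF w(2), of D] by (simp add: sum_apply_fun scl_def)
  have S: "(\<Sum>y\<in>U. w y *\<^sub>R (ind y D *\<^sub>R (y, 1::real))) = ((\<Sum>y\<in>U\<inter>D. w y *\<^sub>R y), (\<Sum>y\<in>U\<inter>D. w y))" for D
  proof -
    have e: "(\<lambda>y. w y *\<^sub>R (ind y D *\<^sub>R (y, 1::real))) = (\<lambda>y. if y \<in> D then w y *\<^sub>R (y, 1::real) else 0)"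
      by (auto simp: ind_def fun_eq_iff zero_prod_def)
    have "(\<Sum>y\<in>U. w y *\<^sub>R (ind y D *\<^sub>R (y, 1::real))) = (\<Sum>y\<in>U\<inter>D. w y *\<^sub>R (y, 1::real))"
      unfolding e by (rule sum.inter_restrict[OF U, symmetric])
    also have "\<dots> = ((\<Sum>y\<in>U\<inter>D. w y *\<^sub>R y), (\<Sum>y\<in>U\<inter>D. w y))"
      by (simp add: sum_prod)
    finally show ?thesis .
  qed
  have s0: "(\<Sum>y\<in>U\<inter>D0. w y) = 0"
  proof -
    have "(\<Sum>y\<in>U. w y *\<^sub>R (ind y D0 *\<^sub>R (0::real^'d, 1::real))) = 0"
    proof -
      have "\<And>y. w y *\<^sub>R v y D0 = w y *\<^sub>R (ind y D0 *\<^sub>R (0::real^'d, 1::real))"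
        by (simp add: v_def)
      then show ?thesis using ev[of D0] by simp
    qed
    then have "snd (\<Sum>y\<in>U. w y *\<^sub>R (ind y D0 *\<^sub>R (0::real^'d, 1::real))) = 0" by simp
    then have "(\<Sum>y\<in>U. w y * ind y D0) = 0" by (simp add: snd_sum)
    moreover have "(\<lambda>y. w y * ind y D0) = (\<lambda>y. if y \<in> D0 then w y else 0)"
      by (auto simp: ind_def fun_eq_iff)
    ultimately show ?thesis using sum.inter_restrict[OF U, of w D0] by metis
  qed
  have sD: "(\<Sum>y\<in>U\<inter>D. w y *\<^sub>R y) = (\<Sum>y\<in>U\<inter>D0. w y *\<^sub>R y) \<and> (\<Sum>y\<in>U\<inter>D. w y) = (\<Sum>y\<in>U\<inter>D0. w y)"
    if D: "D \<in> P" for D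
  proof (cases "D = D0")
    case False
    have "(\<Sum>y\<in>U. w y *\<^sub>R (ind y D *\<^sub>R (y, 1::real)) - w y *\<^sub>R (ind y D0 *\<^sub>R (y, 1::real))) = 0"
    proof -
      have "\<And>y. w y *\<^sub>R v y D = w y *\<^sub>R (ind y D *\<^sub>R (y, 1::real)) - w y *\<^sub>R (ind y D0 *\<^sub>R (y, 1::real))"
        using D False by (simp add: v_def scaleR_diff_left scaleR_diff_right right_diff_distrib)
      then show ?thesis using ev[of D] by simp
    qed
    then have "(\<Sum>y\<in>U. w y *\<^sub>R (ind y D *\<^sub>R (y, 1::real))) = (\<Sum>y\<in>U. w y *\<^sub>R (ind y D0 *\<^sub>R (y, 1::real)))"
      by (simp only: sum_subtractf right_minus_eq)
    then show ?thesis unfolding S by simp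
  qed simp
  show ?thesis using w(1) sD s0 by (intro exI[of _ w]) auto
qed

lemma pdisj: "partition_on S P \<Longrightarrow> D \<in> P \<Longrightarrow> E \<in> P \<Longrightarrow> x \<in> D \<Longrightarrow> x \<in> E \<Longrightarrow> D = E"
  unfolding partition_on_def pairwise_def disjnt_def by blast

lemma psub: "partition_on S P \<Longrightarrow> D \<in> P \<Longrightarrow> D \<subseteq> S"
  unfolding partition_on_def by blast

lemma pne: "partition_on S P \<Longrightarrow> D \<in> P \<Longrightarrow> D \<noteq> {}"
  unfolding partition_on_def by blast

lemma pcov: "partition_on S P \<Longrightarrow> x \<in> S \<Longrightarrow> \<exists>D\<in>P. x \<in> D"
  unfolding partition_on_def by blast

definition blk :: "'a set set \<Rightarrow> 'a \<Rightarrow> 'a set" where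
  "blk P x = (THE B. B \<in> P \<and> x \<in> B)"

lemma blk_eq: "partition_on S P \<Longrightarrow> D \<in> P \<Longrightarrow> x \<in> D \<Longrightarrow> blk P x = D"
  unfolding blk_def by (rule the_equality) (blast dest: pdisj)+

lemma blk: "partition_on S P \<Longrightarrow> x \<in> S \<Longrightarrow> blk P x \<in> P \<and> x \<in> blk P x"
  using pcov blk_eq by metis

lemma restr: "partition_on S P \<Longrightarrow> restrict_partition P (S - X) = (\<lambda>D. D - X) ` P - {{}}"
proof -
  assume p: "partition_on S P"
  have "\<And>B. B \<in> P \<Longrightarrow> B \<inter> (S - X) = B - X" using psub[OF p] by blast
  then have "(\<lambda>B. B \<inter> (S - X)) ` P = (\<lambda>D. D - X) ` P" by (rule image_cong[OF refl])
  then show ?thesis unfolding restrict_partition_def Setcompr_eq_image by simp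
qed

lemma restr_S: "partition_on S P \<Longrightarrow> restrict_partition P S = P"
proof -
  assume p: "partition_on S P"
  have "restrict_partition P S = (\<lambda>D. D - {}) ` P - {{}}" using restr[OF p, of "{}"] by simp
  also have "\<dots> = P - {{}}" by simp
  also have "\<dots> = P" using partition_onD3[OF p] by simp
  finally show ?thesis .
qed

lemma img_minus: "partition_on S P \<Longrightarrow> x \<in> S \<Longrightarrow>
   (\<lambda>D. D - {x}) ` P = insert (blk P x - {x}) (P - {blk P x})"
proof -
  assume p: "partition_on S P" and x: "x \<in> S"
  have b: "blk P x \<in> P" "x \<in> blk P x" using blk[OF p x] by simp_all
  have nx: "x \<notin> D" if "D \<in> P" "D \<noteq> blk P x" for D
  proof
    assume "x \<in> D"
    then have "D = blk P x" by (rule pdisj[OF p that(1) b(1) _ b(2)])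
    with that(2) show False by simp
  qed
  show ?thesis
  proof
    show "(\<lambda>D. D - {x}) ` P \<subseteq> insert (blk P x - {x}) (P - {blk P x})"
    proof
      fix E assume "E \<in> (\<lambda>D. D - {x}) ` P"
      then obtain D where D: "D \<in> P" "E = D - {x}" by blast
      show "E \<in> insert (blk P x - {x}) (P - {blk P x})"
      proof (cases "D = blk P x")
        case True
        then have "E = blk P x - {x}" using D(2) by simp
        then show ?thesis by simp
      next
        case False
        have "x \<notin> D" by (rule nx[OF D(1) False])
        then have "E = D" using D(2) by simp
        then show ?thesis using D(1) False by simp
      qed
    qed
    show "insert (blk P x - {x}) (P - {blk P x}) \<subseteq> (\<lambda>D. D - {x}) ` P"
    proof
      fix E assume "E \<in> insert (blk P x - {x}) (P - {blk P x})"
      then show "E \<in> (\<lambda>D. D - {x}) ` P"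
      proof
        assume e: "E = blk P x - {x}"
        show ?thesis by (rule image_eqI[where x="blk P x", OF _ b(1)]) (simp add: e)
      next
        assume "E \<in> P - {blk P x}"
        then have E: "E \<in> P" "E \<noteq> blk P x" by auto
        have "x \<notin> E" by (rule nx[OF E])
        then have "E = E - {x}" by simp
        then show ?thesis using E(1) by (rule image_eqI)
      qed
    qed
  qed
qed

lemma bx_notin: "partition_on S P \<Longrightarrow> x \<in> S \<Longrightarrow> blk P x - {x} \<notin> P - {blk P x}"
proof
  assume p: "partition_on S P" and x: "x \<in> S" and m: "blk P x - {x} \<in> P - {blk P x}"
  have b: "blk P x \<in> P" "x \<in> blk P x" using blk[OF p x] by auto
  have "blk P x - {x} \<noteq> {}" using m pne[OF p] by auto
  then obtain y where "y \<in> blk P x - {x}" by blast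
  moreover have "blk P x - {x} \<in> P" using m by blast
  ultimately have "blk P x - {x} = blk P x" using pdisj[OF p _ b(1)] by blast
  then show False using b(2) by blast
qed

lemma Qform: "partition_on S P \<Longrightarrow> x \<in> S \<Longrightarrow>
   restrict_partition P (S - {x}) = insert (blk P x - {x}) (P - {blk P x}) - {{}}"
  using restr[of S P "{x}"] img_minus by metis

lemma recon: "partition_on S P \<Longrightarrow> x \<in> S \<Longrightarrow>
   P = insert (blk P x) (restrict_partition P (S - {x}) - {blk P x - {x}})"
proof -
  assume p: "partition_on S P" and x: "x \<in> S"
  have b: "blk P x \<in> P" "x \<in> blk P x" using blk[OF p x] by auto
  have e: "(insert (blk P x - {x}) (P - {blk P x}) - {{}}) - {blk P x - {x}} = P - {blk P x}"
    using pne[OF p] bx_notin[OF p x] by blast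
  show ?thesis unfolding Qform[OF p x] e using b(1) by (simp add: insert_absorb)
qed

definition mv :: "'a set \<Rightarrow> 'a set set \<Rightarrow> 'a \<Rightarrow> 'a set \<Rightarrow> 'a set set" where
  "mv S P x C = insert (insert x C) (restrict_partition P (S - {x}) - {C})"

lemma upper_struct:
  assumes p: "partition_on S P" and p': "partition_on S P'" and fin: "finite P"
    and cd: "card P' = card P" and x: "x \<in> S"
    and eq: "restrict_partition P (S - {x}) = restrict_partition P' (S - {x})"
    and ne: "P' \<noteq> P"
  shows "\<exists>C\<in>P - {blk P x}. P' = mv S P x C"
proof -
  define B where "B = blk P x"
  define B' where "B' = blk P' x"
  define Q where "Q = restrict_partition P (S - {x})"
  have b: "B \<in> P" "x \<in> B" using blk[OF p x] B_def by auto
  have b': "B' \<in> P'" "x \<in> B'" using blk[OF p' x] B'_def by auto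
  have P'eq: "P' = insert B' (Q - {B' - {x}})" using recon[OF p' x] eq Q_def B'_def by simp
  have Peq: "P = insert B (Q - {B - {x}})" using recon[OF p x] Q_def B_def by simp
  have Qf: "Q = insert (B - {x}) (P - {B}) - {{}}" using Qform[OF p x] Q_def B_def by simp
  have B'i: "B' = insert x (B' - {x})" using b' by auto
  have Bi: "B = insert x (B - {x})" using b by auto
  show ?thesis
  proof (cases "B' - {x} = B - {x}")
    case True
    have "B' = insert x (B - {x})" using b'(2) True by blast
    then have "B' = B" using b(2) by blast
    then have "P' = P" using P'eq Peq True by simp
    then show ?thesis using ne by simp
  next
    case F1: False
    show ?thesis
    proof (cases "B' - {x} = {}")
      case True
      then have Bne: "B - {x} \<noteq> {}" using F1 by (metis Diff_empty)
      have Qe: "Q = insert (B - {x}) (P - {B})" using Qf Bne pne[OF p] by auto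
      have "{} \<notin> Q" using Qf by simp
      have "B' = {x}" using True b'(2) by blast
      then have "P' = insert {x} Q" using P'eq \<open>{} \<notin> Q\<close> by simp
      moreover have "{x} \<notin> Q"
      proof -
        have n1: "{x} \<notin> P - {B}"
        proof
          assume a: "{x} \<in> P - {B}"
          then have "{x} = B" using pdisj[OF p _ b(1), of "{x}" x] b(2) by blast
          then show False using a by simp
        qed
        have n2: "{x} \<noteq> B - {x}" by blast
        show ?thesis unfolding Qf using n1 n2 by simp
      qed
      moreover have "finite Q" using Qe fin by simp
      ultimately have "card P' = card Q + 1" by simp
      moreover have "card Q = card P"
      proof -
        have "card P > 0" using fin b(1) by (auto simp: card_gt_0_iff)
        moreover have "B - {x} \<notin> P - {B}" using bx_notin[OF p x] B_def by simp
        ultimately show ?thesis unfolding Qe using fin b(1) by (simp add: card_insert_if)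
      qed
      ultimately show ?thesis using cd by simp
    next
      case F2: False
      have "B' - {x} \<in> Q" using eq Q_def restr[OF p' , of "{x}"] b'(1) F2 by auto
      then have C: "B' - {x} \<in> P - {B}" using Qf F1 by auto
      have "insert x (B' - {x}) = B'" using b'(2) by blast
      then have "P' = mv S P x (B' - {x})" unfolding mv_def Q_def[symmetric] using P'eq by simp
      then show ?thesis using C B_def by blast
    qed
  qed
qed

lemma pnot: "partition_on S P \<Longrightarrow> D \<in> P \<Longrightarrow> E \<in> P \<Longrightarrow> D \<noteq> E \<Longrightarrow> z \<in> D \<Longrightarrow> z \<notin> E"
  using pdisj by metis

lemma partition_by_fun:
  assumes ne: "\<And>p. p \<in> F \<Longrightarrow> p \<noteq> {}" and un: "\<Union>F = S"
    and g: "\<And>p z. p \<in> F \<Longrightarrow> z \<in> p \<Longrightarrow> p = g z"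
  shows "partition_on S F"
proof (rule partition_onI)
  fix p q assume pq: "p \<in> F" "q \<in> F" "p \<noteq> q"
  show "disjnt p q" unfolding disjnt_def
  proof (rule ccontr)
    assume "p \<inter> q \<noteq> {}"
    then obtain z where "z \<in> p" "z \<in> q" by blast
    then have "p = g z" "q = g z" using g pq by auto
    then show False using pq(3) by simp
  qed
qed (use ne un in auto)

lemma mv_form:
  assumes p: "partition_on S P" and x: "x \<in> S" and Bne: "blk P x - {x} \<noteq> {}"
    and C: "C \<in> P - {blk P x}"
  shows "mv S P x C = insert (insert x C) (insert (blk P x - {x}) (P - {blk P x, C}))"
proof -
  have Qe: "restrict_partition P (S - {x}) = insert (blk P x - {x}) (P - {blk P x})"
    using Qform[OF p x] Bne pne[OF p] by auto
  have "C \<noteq> blk P x - {x}" using bx_notin[OF p x] C by metis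
  then have "insert (blk P x - {x}) (P - {blk P x}) - {C} = insert (blk P x - {x}) (P - {blk P x, C})"
    by auto
  then show ?thesis unfolding mv_def Qe by simp
qed

lemma mv_good:
  assumes p: "partition_on S P" and fin: "finite P" and x: "x \<in> S" and Bne: "blk P x - {x} \<noteq> {}"
    and C: "C \<in> P - {blk P x}"
  shows "partition_on S (mv S P x C)" "card (mv S P x C) = card P"
    "restrict_partition (mv S P x C) (S - {x}) = restrict_partition P (S - {x})"
    "mv S P x C \<noteq> P" "insert x C \<in> mv S P x C"
proof -
  define B where "B = blk P x"
  have b: "B \<in> P" "x \<in> B" using blk[OF p x] B_def by simp_all
  have Cp: "C \<in> P" "C \<noteq> B" using C B_def by auto
  have xC: "x \<notin> C" using pnot[OF p b(1) Cp(1) Cp(2)[symmetric] b(2)] .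
  have F: "mv S P x C = insert (insert x C) (insert (B - {x}) (P - {B, C}))"
    using mv_form[OF p x Bne C] B_def by simp
  have xD: "x \<notin> D" if "D \<in> P - {B, C}" for D
    using pnot[OF p b(1), of D x] that b(2) by auto
  have nP: "insert x C \<notin> P"
  proof
    assume a: "insert x C \<in> P"
    have "insert x C = B" by (rule pdisj[OF p a b(1)]) (auto simp: b(2))
    moreover obtain z where "z \<in> C" using pne[OF p Cp(1)] by blast
    ultimately show False using pnot[OF p b(1) Cp(1) Cp(2)[symmetric]] by blast
  qed
  show "insert x C \<in> mv S P x C" unfolding F by simp
  then show "mv S P x C \<noteq> P" using nP by metis
  define g where "g = (\<lambda>z. if z = x \<or> z \<in> C then insert x C else if z \<in> B then B - {x} else blk P z)"
  show part: "partition_on S (mv S P x C)"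
  proof (rule partition_by_fun[where g = g])
    fix q assume "q \<in> mv S P x C"
    then show "q \<noteq> {}" unfolding F using Bne B_def pne[OF p] by auto
  next
    have "\<Union>P = S" using p partition_onD1 by metis
    moreover have "\<Union>P = insert x (C \<union> (B - {x}) \<union> \<Union>(P - {B, C}))"
      using b Cp by blast
    ultimately show "\<Union>(mv S P x C) = S" unfolding F by auto
  next
    fix q z assume q: "q \<in> mv S P x C" and z: "z \<in> q"
    show "q = g z"
    proof -
      consider "q = insert x C" | "q = B - {x}" | "q \<in> P - {B, C}" using q unfolding F by blast
      then show ?thesis
      proof cases
        case 1 then show ?thesis using z by (auto simp: g_def)
      next
        case 2
        then have "z \<in> B" "z \<noteq> x" using z by auto
        moreover have "z \<notin> C" using pnot[OF p b(1) Cp(1) Cp(2)[symmetric]] \<open>z \<in> B\<close> by blast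
        ultimately show ?thesis using 2 by (simp add: g_def)
      next
        case 3
        have "z \<noteq> x" using xD[OF 3] z by blast
        moreover have "z \<notin> C" using pnot[OF p _ Cp(1), of q z] 3 z by blast
        moreover have "z \<notin> B" using pnot[OF p _ b(1), of q z] 3 z by blast
        moreover have "blk P z = q" using blk_eq[OF p _ z] 3 by blast
        ultimately show ?thesis by (simp add: g_def)
      qed
    qed
  qed
  show "card (mv S P x C) = card P"
  proof -
    have c2: "card (P - {B, C}) = card P - 2" using fin b(1) Cp by (simp add: card_Diff_subset)
    have "card P \<ge> 2"
    proof -
      have "{B, C} \<subseteq> P" using b(1) Cp by simp
      then have "card {B, C} \<le> card P" using fin by (rule card_mono[rotated])
      then show ?thesis using Cp(2) by simp
    qed
    moreover have "B - {x} \<notin> P - {B, C}" using bx_notin[OF p x] B_def by auto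
    moreover have "insert x C \<notin> insert (B - {x}) (P - {B, C})" using nP by auto
    ultimately show ?thesis unfolding F using c2 fin by (simp add: card_insert_if)
  qed
  show "restrict_partition (mv S P x C) (S - {x}) = restrict_partition P (S - {x})"
  proof -
    have "(\<lambda>D. D - {x}) ` (P - {B, C}) = P - {B, C}"
    proof -
      have "(\<lambda>D. D - {x}) ` (P - {B, C}) = (\<lambda>D. D) ` (P - {B, C})"
        by (rule image_cong[OF refl]) (use xD in auto)
      then show ?thesis by simp
    qed
    then have "(\<lambda>D. D - {x}) ` mv S P x C = insert C (insert (B - {x}) (P - {B, C}))"
      unfolding F using xC by auto
    also have "\<dots> = insert (B - {x}) (P - {B})" using Cp by auto
    finally show ?thesis using restr[OF part, of "{x}"] Qform[OF p x] B_def by simp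
  qed
qed

lemma dist_set_fin: "finite S \<Longrightarrow> finite {card X | X. X \<subseteq> S \<and> restrict_partition P (S - X) = restrict_partition P' (S - X)}"
proof -
  assume S: "finite S"
  have sub: "{card X | X. X \<subseteq> S \<and> restrict_partition P (S - X) = restrict_partition P' (S - X)} \<subseteq> card ` Pow S"
    by blast
  have fi: "finite (card ` Pow S)" using S by simp
  show ?thesis by (rule finite_subset[OF sub fi])
qed

lemma dist1:
  assumes S: "finite S" and x: "x \<in> S"
    and eq: "restrict_partition P (S - {x}) = restrict_partition P' (S - {x})"
    and ne: "restrict_partition P S \<noteq> restrict_partition P' S"
  shows "partition_distance S P P' = 1"
proof -
  define A where "A = {card X | X. X \<subseteq> S \<and> restrict_partition P (S - X) = restrict_partition P' (S - X)}"
  have fA: "finite A" unfolding A_def by (rule dist_set_fin[OF S])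
  have 1: "1 \<in> A" unfolding A_def using x eq by (intro CollectI exI[of _ "{x}"]) simp
  have 0: "0 \<notin> A"
  proof
    assume "0 \<in> A"
    then have "\<exists>X. 0 = card X \<and> X \<subseteq> S \<and> restrict_partition P (S - X) = restrict_partition P' (S - X)"
      unfolding A_def by simp
    then obtain X where X: "X \<subseteq> S" "card X = 0" "restrict_partition P (S - X) = restrict_partition P' (S - X)"
      by auto
    have "finite X" using X(1) S by (rule finite_subset)
    then have "X = {}" using X(2) by simp
    then show False using X(3) ne by simp
  qed
  have "Min A \<le> 1" using fA 1 by (rule Min_le)
  moreover have "A \<noteq> {}" using 1 by blast
  then have "Min A \<in> A" using fA by (intro Min_in)
  then have "Min A \<noteq> 0" using 0 by metis
  ultimately have "Min A = 1" by linarith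
  then show ?thesis unfolding partition_distance_def A_def .
qed

lemma dist1_inv:
  assumes S: "finite S" and d: "partition_distance S P P' = 1"
  shows "\<exists>x\<in>S. restrict_partition P (S - {x}) = restrict_partition P' (S - {x})
     \<and> restrict_partition P S \<noteq> restrict_partition P' S"
proof -
  define A where "A = {card X | X. X \<subseteq> S \<and> restrict_partition P (S - X) = restrict_partition P' (S - X)}"
  have fA: "finite A" unfolding A_def by (rule dist_set_fin[OF S])
  have "restrict_partition P (S - S) = restrict_partition P' (S - S)"
    unfolding restrict_partition_def by auto
  then have "card S \<in> A" unfolding A_def by blast
  then have MA: "Min A \<in> A" using fA by (intro Min_in) auto
  have M1: "Min A = 1" using d unfolding partition_distance_def A_def .
  then obtain X where X: "X \<subseteq> S" "card X = 1" "restrict_partition P (S - X) = restrict_partition P' (S - X)"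
    using MA unfolding A_def by auto
  then obtain x where "X = {x}" by (meson card_1_singletonE)
  moreover have "restrict_partition P S \<noteq> restrict_partition P' S"
  proof
    assume "restrict_partition P S = restrict_partition P' S"
    then have "0 \<in> A" unfolding A_def by (intro CollectI exI[of _ "{}"]) simp
    then have "Min A \<le> 0" by (rule Min_le[OF fA])
    then show False using M1 by simp
  qed
  ultimately show ?thesis using X by auto
qed

lemma mv_inj:
  assumes p: "partition_on S P" and fin: "finite P"
    and x: "x \<in> S" and Bne: "blk P x - {x} \<noteq> {}" and C: "C \<in> P - {blk P x}"
    and x': "x' \<in> S" and Bne': "blk P x' - {x'} \<noteq> {}" and C': "C' \<in> P - {blk P x'}"
    and eq: "mv S P x C = mv S P x' C'"
  shows "x = x' \<and> C = C'"
proof -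
  define F where "F = mv S P x C"
  have pF: "partition_on S F" using mv_good(1)[OF p fin x Bne C] F_def by simp
  have i1: "insert x C \<in> F" using mv_good(5)[OF p fin x Bne C] F_def by simp
  have i2: "insert x' C' \<in> F" using mv_good(5)[OF p fin x' Bne' C'] F_def eq by simp
  have b: "blk P x \<in> P" "x \<in> blk P x" using blk[OF p x] by simp_all
  have b': "blk P x' \<in> P" "x' \<in> blk P x'" using blk[OF p x'] by simp_all
  have xC: "x \<notin> C" using pnot[OF p b(1), of C x] C b(2) by auto
  have xC': "x' \<notin> C'" using pnot[OF p b'(1), of C' x'] C' b'(2) by auto
  show ?thesis
  proof (cases "x = x'")
    case True
    have "insert x C = insert x C'"
      using pdisj[OF pF i1 i2, of x] True by simp
    then have "C = C'" using xC xC' True by (simp add: insert_ident)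
    then show ?thesis using True by simp
  next
    case False
    have "restrict_partition F (S - {x}) = restrict_partition P (S - {x})"
      using mv_good(3)[OF p fin x Bne C] F_def by simp
    moreover have "insert x' C' - {x} \<in> restrict_partition F (S - {x})"
    proof -
      have "insert x' C' - {x} \<in> (\<lambda>D. D - {x}) ` F" by (rule imageI[OF i2])
      moreover have "insert x' C' - {x} \<noteq> {}" using False by simp
      ultimately show ?thesis unfolding restr[OF pF] by simp
    qed
    ultimately have "insert x' C' - {x} \<in> (\<lambda>D. D - {x}) ` P - {{}}" using restr[OF p, of "{x}"] by simp
    then have "insert x' C' - {x} \<in> (\<lambda>D. D - {x}) ` P" by (rule DiffD1)
    then obtain D where D: "D \<in> P" "insert x' C' - {x} = D - {x}" by (rule imageE)
    have "x' \<in> insert x' C' - {x}" using False by simp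
    then have "x' \<in> D - {x}" using D(2) by simp
    then have "x' \<in> D" by simp
    then have "D = blk P x'" using blk_eq[OF p D(1)] by simp
    then have E: "insert x' C' - {x} = blk P x' - {x}" using D(2) by simp
    have dj: "z \<notin> blk P x'" if "z \<in> C'" for z using pnot[OF p _ b'(1), of C' z] C' that by auto
    have "C' \<subseteq> {x}"
    proof
      fix z assume z: "z \<in> C'"
      show "z \<in> {x}"
      proof (rule ccontr)
        assume zx: "z \<notin> {x}"
        have "z \<in> insert x' C' - {x}" using z zx by simp
        then have "z \<in> blk P x' - {x}" using E by simp
        then show False using dj[OF z] by simp
      qed
    qed
    moreover have "C' \<noteq> {}" using pne[OF p] C' by blast
    ultimately have Cx: "C' = {x}" by (metis subset_singleton_iff)
    then have nb: "x \<notin> blk P x'" using dj[of x] by simp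
    have "blk P x' - {x} = blk P x'" using nb by blast
    then have "blk P x' = insert x' C' - {x}" using E by simp
    then have "blk P x' = {x'}" using Cx False by auto
    then show ?thesis using Bne' by simp
  qed
qed

definition feas :: "(real^'d) set set \<Rightarrow> (real^'d \<Rightarrow> real) \<Rightarrow> real^'d \<Rightarrow> bool" where
  "feas P l p \<longleftrightarrow> (\<forall>D\<in>P. \<forall>y\<in>D. 0 \<le> l y) \<and> (\<forall>D\<in>P. sum l D = 1 \<and> (\<Sum>y\<in>D. l y *\<^sub>R y) = p)"

lemma feas_exists:
  fixes P :: "(real^'d) set set"
  assumes p: "partition_on S P" and S: "finite S" and pin: "\<forall>D\<in>P. pt \<in> convex hull D"
  shows "\<exists>l. feas P l pt"
proof -
  have "\<forall>D\<in>P. \<exists>u. (\<forall>x\<in>D. 0 \<le> u x) \<and> sum u D = 1 \<and> (\<Sum>x\<in>D. u x *\<^sub>R x) = pt"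
  proof
    fix D assume D: "D \<in> P"
    have "finite D" using psub[OF p D] S by (rule finite_subset)
    then show "\<exists>u. (\<forall>x\<in>D. 0 \<le> u x) \<and> sum u D = 1 \<and> (\<Sum>x\<in>D. u x *\<^sub>R x) = pt"
      using pin D convex_hull_finite[of D] by auto
  qed
  then obtain U where U: "\<forall>D\<in>P. (\<forall>x\<in>D. 0 \<le> U D x) \<and> sum (U D) D = 1 \<and> (\<Sum>x\<in>D. U D x *\<^sub>R x) = pt"
    by (rule bchoice[elim_format]) blast
  define l where "l = (\<lambda>y. U (blk P y) y)"
  have lD: "l y = U D y" if "D \<in> P" "y \<in> D" for D y
    unfolding l_def using blk_eq[OF p that] by simp
  have "feas P l pt" unfolding feas_def
  proof (intro conjI ballI)
    fix D y assume "D \<in> P" "y \<in> D" then show "0 \<le> l y" using lD U by simp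
  next
    fix D assume D: "D \<in> P"
    have "sum l D = sum (U D) D" by (rule sum.cong) (use lD D in auto)
    then show "sum l D = 1" using U D by simp
    have "(\<Sum>y\<in>D. l y *\<^sub>R y) = (\<Sum>y\<in>D. U D y *\<^sub>R y)" by (rule sum.cong) (use lD D in auto)
    then show "(\<Sum>y\<in>D. l y *\<^sub>R y) = pt" using U D by simp
  qed
  then show ?thesis by blast
qed

lemma feas_rem:
  fixes P :: "(real^'d) set set"
  assumes p: "partition_on S P" and S: "finite S" and f: "feas P l pt" and x: "x \<in> S" and lx: "l x = 0"
  shows "pt \<in> convex hull (blk P x - {x}) \<and> (\<forall>D\<in>P. pt \<in> convex hull D)"
proof
  have fD: "finite D" if "D \<in> P" for D using psub[OF p that] S by (rule finite_subset)
  show "\<forall>D\<in>P. pt \<in> convex hull D"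
  proof
    fix D assume D: "D \<in> P"
    show "pt \<in> convex hull D" unfolding convex_hull_finite[OF fD[OF D]]
      using f D unfolding feas_def by blast
  qed
  have b: "blk P x \<in> P" "x \<in> blk P x" using blk[OF p x] by simp_all
  define B where "B = blk P x"
  have fB: "finite (B - {x})" using fD[OF b(1)] B_def by simp
  have "sum l (B - {x}) = 1" using f b B_def lx fD[OF b(1)] unfolding feas_def by (simp add: sum_diff1)
  moreover have "(\<Sum>y\<in>B - {x}. l y *\<^sub>R y) = pt" using f b B_def lx fD[OF b(1)] unfolding feas_def by (simp add: sum_diff1)
  moreover have "\<forall>y\<in>B - {x}. 0 \<le> l y" using f b B_def unfolding feas_def by simp
  ultimately show "pt \<in> convex hull (blk P x - {x})" unfolding B_def[symmetric] convex_hull_finite[OF fB]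
    by blast
qed

lemma reduce:
  fixes P :: "(real^'d) set set"
  assumes p: "partition_on S P" and S: "finite S" and f: "feas P l pt"
    and ws: "\<forall>D\<in>P. sum w D = 0" and wq: "\<forall>D\<in>P. (\<Sum>y\<in>D. w y *\<^sub>R y) = q"
    and z0: "z0 \<in> S" "w z0 > 0"
  shows "\<exists>t\<ge>0. \<exists>z\<in>S. w z < 0 \<and> l z + t * w z = 0 \<and> feas P (\<lambda>y. l y + t * w y) (pt + t *\<^sub>R q)"
proof -
  have fD: "finite D" if "D \<in> P" for D using psub[OF p that] S by (rule finite_subset)
  have l0: "0 \<le> l y" if "y \<in> S" for y
  proof -
    have "blk P y \<in> P" "y \<in> blk P y" using blk[OF p that] by simp_all
    then show ?thesis using f unfolding feas_def by blast
  qed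
  define N where "N = {y \<in> S. w y < 0}"
  have fN: "finite N" using S N_def by simp
  have Nne: "N \<noteq> {}"
  proof
    assume N0: "N = {}"
    have b: "blk P z0 \<in> P" "z0 \<in> blk P z0" using blk[OF p z0(1)] by simp_all
    have "\<forall>y\<in>blk P z0. 0 \<le> w y" using N0 psub[OF p b(1)] unfolding N_def by force
    then have "0 < sum w (blk P z0)" using sum_pos2[where f=w, OF fD[OF b(1)] b(2) z0(2)] by blast
    then show False using ws b(1) by simp
  qed
  define t where "t = Min ((\<lambda>y. l y / (- w y)) ` N)"
  have "t \<in> (\<lambda>y. l y / (- w y)) ` N" unfolding t_def using fN Nne by (intro Min_in) auto
  then obtain z where z: "z \<in> N" "t = l z / (- w z)" by blast
  have zS: "z \<in> S" "w z < 0" using z(1) N_def by auto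
  have t0: "t \<ge> 0" using z(2) l0[OF zS(1)] zS(2) by (simp add: divide_nonneg_neg)
  have tle: "t \<le> l y / (- w y)" if "y \<in> N" for y unfolding t_def using fN that by (intro Min_le) auto
  have lz: "l z + t * w z = 0" using z(2) zS(2) by (simp add: field_simps)
  have "feas P (\<lambda>y. l y + t * w y) (pt + t *\<^sub>R q)" unfolding feas_def
  proof (intro conjI ballI)
    fix D y assume D: "D \<in> P" and y: "y \<in> D"
    have yS: "y \<in> S" using psub[OF p D] y by blast
    show "0 \<le> l y + t * w y"
    proof (cases "w y < 0")
      case True
      then have "y \<in> N" using yS N_def by simp
      then have "t \<le> l y / (- w y)" by (rule tle)
      then have "t * (- w y) \<le> l y" using True by (simp add: field_simps)
      then show ?thesis by simp
    next
      case False
      then show ?thesis using l0[OF yS] t0 by simp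
    qed
  next
    fix D assume D: "D \<in> P"
    show "(\<Sum>y\<in>D. l y + t * w y) = 1"
      using f D ws unfolding feas_def by (simp add: sum.distrib sum_distrib_left[symmetric])
    have "(\<Sum>y\<in>D. (l y + t * w y) *\<^sub>R y) = (\<Sum>y\<in>D. l y *\<^sub>R y) + t *\<^sub>R (\<Sum>y\<in>D. w y *\<^sub>R y)"
      by (simp add: scaleR_add_left sum.distrib scaleR_sum_right)
    then show "(\<Sum>y\<in>D. (l y + t * w y) *\<^sub>R y) = pt + t *\<^sub>R q" using f D wq unfolding feas_def by simp
  qed
  then show ?thesis using t0 zS lz by blast
qed

lemma keyS:
  fixes P :: "(real^'d) set set"
  assumes p: "partition_on S P" and S: "finite S" and fin: "finite P" and Pne: "P \<noteq> {}"
    and U: "U \<subseteq> S" and c: "card U > (card P - 1) * (CARD('d) + 1) + 1"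
  shows "\<exists>w q. (\<forall>y. y \<notin> U \<longrightarrow> w y = 0) \<and> (\<exists>y\<in>U. w y \<noteq> 0) \<and> (\<forall>D\<in>P. sum w D = 0)
           \<and> (\<forall>D\<in>P. (\<Sum>y\<in>D. w y *\<^sub>R y) = q)"
proof -
  obtain D0 where D0: "D0 \<in> P" using Pne by blast
  have fU: "finite U" using U S by (rule finite_subset)
  obtain w0 where w0: "\<exists>y\<in>U. w0 y \<noteq> 0" "\<forall>D\<in>P. (\<Sum>y\<in>U\<inter>D. w0 y) = 0"
    "\<forall>D\<in>P. (\<Sum>y\<in>U\<inter>D. w0 y *\<^sub>R y) = (\<Sum>y\<in>U\<inter>D0. w0 y *\<^sub>R y)"
    using key[OF fin D0 fU c] by blast
  define w where "w = (\<lambda>y. if y \<in> U then w0 y else 0)"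
  have fD: "finite D" if "D \<in> P" for D using psub[OF p that] S by (rule finite_subset)
  have s1: "sum w D = 0" if D: "D \<in> P" for D
  proof -
    have "sum w D = sum w0 (D \<inter> U)" unfolding w_def by (rule sum.inter_restrict[OF fD[OF D], symmetric])
    also have "\<dots> = 0" using w0(2) D by (simp add: Int_commute)
    finally show ?thesis .
  qed
  have s2: "(\<Sum>y\<in>D. w y *\<^sub>R y) = (\<Sum>y\<in>U\<inter>D0. w0 y *\<^sub>R y)" if D: "D \<in> P" for D
  proof -
    have "(\<Sum>y\<in>D. w y *\<^sub>R y) = (\<Sum>y\<in>D. if y \<in> U then w0 y *\<^sub>R y else 0)"
      by (rule sum.cong) (auto simp: w_def)
    also have "\<dots> = (\<Sum>y\<in>D \<inter> U. w0 y *\<^sub>R y)" by (rule sum.inter_restrict[OF fD[OF D], symmetric])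
    also have "\<dots> = (\<Sum>y\<in>U\<inter>D0. w0 y *\<^sub>R y)" using w0(3) D by (simp add: Int_commute)
    finally show ?thesis .
  qed
  have "\<forall>y. y \<notin> U \<longrightarrow> w y = 0" by (simp add: w_def)
  moreover have "\<exists>y\<in>U. w y \<noteq> 0" using w0(1) by (auto simp: w_def)
  ultimately show ?thesis using s1 s2 by blast
qed

lemma normalize:
  fixes P :: "(real^'d) set set"
  assumes "\<forall>D\<in>P. sum w D = 0" "\<forall>D\<in>P. (\<Sum>y\<in>D. w y *\<^sub>R y) = q" "w y0 \<noteq> 0"
  shows "\<exists>w' q'. (\<forall>D\<in>P. sum w' D = 0) \<and> (\<forall>D\<in>P. (\<Sum>y\<in>D. w' y *\<^sub>R y) = q') \<and> w' y0 > 0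
     \<and> (\<forall>y. w y = 0 \<longrightarrow> w' y = 0)"
proof (cases "w y0 > 0")
  case True then show ?thesis using assms by blast
next
  case False
  then have "- w y0 > 0" using assms(3) by simp
  moreover have "\<forall>D\<in>P. sum (\<lambda>y. - w y) D = 0" using assms(1) by (simp add: sum_negf)
  moreover have "\<forall>D\<in>P. (\<Sum>y\<in>D. (- w y) *\<^sub>R y) = - q" using assms(2) by (simp add: sum_negf)
  ultimately show ?thesis by (intro exI[of _ "\<lambda>y. - w y"] exI[of _ "- q"]) auto
qed

lemma reduce_supp:
  fixes P :: "(real^'d) set set"
  assumes p: "partition_on S P" and S: "finite S" and f: "feas P l q"
    and ws: "\<forall>D\<in>P. sum w D = 0" and wq: "\<forall>D\<in>P. (\<Sum>y\<in>D. w y *\<^sub>R y) = q'"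
    and z0: "z0 \<in> S" "w z0 > 0" and sup: "\<forall>y. y \<notin> V \<longrightarrow> w y = 0"
  shows "\<exists>z\<in>V. w z < 0 \<and> (\<exists>l' q''. feas P l' q'' \<and> l' z = 0
           \<and> {y\<in>S. l' y \<noteq> 0} \<subseteq> ({y\<in>S. l y \<noteq> 0} \<union> V) - {z})"
proof -
  obtain t z where t: "t \<ge> 0" "z \<in> S" "w z < 0" "l z + t * w z = 0"
    "feas P (\<lambda>y. l y + t * w y) (q + t *\<^sub>R q')"
    using reduce[OF p S f ws wq z0] by blast
  have zV: "z \<in> V" using t(3) sup by force
  have "{y\<in>S. l y + t * w y \<noteq> 0} \<subseteq> ({y\<in>S. l y \<noteq> 0} \<union> V) - {z}"
  proof
    fix y assume y: "y \<in> {y\<in>S. l y + t * w y \<noteq> 0}"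
    then have "y \<noteq> z" using t(4) by auto
    moreover have "y \<in> {y\<in>S. l y \<noteq> 0} \<union> V"
    proof (rule ccontr)
      assume "y \<notin> {y\<in>S. l y \<noteq> 0} \<union> V"
      then have "l y = 0" "w y = 0" using y sup by auto
      then show False using y by simp
    qed
    ultimately show "y \<in> ({y\<in>S. l y \<noteq> 0} \<union> V) - {z}" by blast
  qed
  then show ?thesis using zV t by blast
qed

lemma removable_count:
  fixes P :: "(real^'d) set set"
  assumes p: "partition_on S P" and S: "finite S" and fin: "finite P" and Pne: "P \<noteq> {}"
    and pt: "\<forall>D\<in>P. pt \<in> convex hull D"
    and big: "card S > (card P - 1) * (CARD('d) + 1) + 1"
  shows "\<exists>R \<subseteq> S. card R \<ge> card S + 1 - ((card P - 1) * (CARD('d) + 1) + 1)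
     \<and> (\<forall>x\<in>R. \<exists>pp. pp \<in> convex hull (blk P x - {x}) \<and> (\<forall>D\<in>P. pp \<in> convex hull D))"
proof -
  define K where "K = (card P - 1) * (CARD('d) + 1) + 1"
  define rem where "rem = (\<lambda>x. \<exists>pp. pp \<in> convex hull (blk P x - {x}) \<and> (\<forall>D\<in>P. pp \<in> convex hull D))"
  have ex: "\<exists>m. \<exists>l q. feas P l q \<and> card {y\<in>S. l y \<noteq> 0} = m"
    using feas_exists[OF p S pt] by blast
  then obtain m where m: "\<exists>l q. feas P l q \<and> card {y\<in>S. l y \<noteq> 0} = m"
    and mmin: "\<And>k. k < m \<Longrightarrow> \<not> (\<exists>l q. feas P l q \<and> card {y\<in>S. l y \<noteq> 0} = k)"
    using exists_least_iff[of "\<lambda>m. \<exists>l q. feas P l q \<and> card {y\<in>S. l y \<noteq> 0} = m"] by blast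
  then obtain l q where f: "feas P l q" and cm: "card {y\<in>S. l y \<noteq> 0} = m" by blast
  define T where "T = {y\<in>S. l y \<noteq> 0}"
  have TS: "T \<subseteq> S" unfolding T_def by blast
  have fT: "finite T" using TS S by (rule finite_subset)
  have cT: "card T = m" using cm T_def by simp
  have remST: "rem x" if "x \<in> S - T" for x
  proof -
    have "l x = 0" using that T_def by simp
    then show ?thesis unfolding rem_def using feas_rem[OF p S f, of x] that by blast
  qed
  have noW: "w y = 0"
    if ws: "\<forall>D\<in>P. sum w D = 0" and wq: "\<forall>D\<in>P. (\<Sum>y\<in>D. w y *\<^sub>R y) = q'"
      and sup: "\<forall>y. y \<notin> T \<longrightarrow> w y = 0" for w q' y
  proof (rule ccontr)
    assume wy: "w y \<noteq> 0"
    obtain w' q'' where w': "\<forall>D\<in>P. sum w' D = 0" "\<forall>D\<in>P. (\<Sum>y\<in>D. w' y *\<^sub>R y) = q''" "w' y > 0"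
      "\<forall>y. w y = 0 \<longrightarrow> w' y = 0"
      using normalize[OF ws wq wy] by blast
    have yT: "y \<in> T" using wy sup by blast
    have sup': "\<forall>y. y \<notin> T \<longrightarrow> w' y = 0" using sup w'(4) by blast
    obtain z l' q3 where z: "z \<in> T" "feas P l' q3" "l' z = 0" "{y\<in>S. l' y \<noteq> 0} \<subseteq> (T \<union> T) - {z}"
      using reduce_supp[OF p S f w'(1) w'(2) _ w'(3) sup'] yT TS unfolding T_def by blast
    have "card {y\<in>S. l' y \<noteq> 0} \<le> card (T - {z})"
      using z(4) fT by (intro card_mono) auto
    also have "\<dots> < m"
    proof -
      have "card T > 0" using z(1) fT by (auto simp: card_gt_0_iff)
      then show ?thesis using z(1) fT cT by simp
    qed
    finally show False using mmin z(2) by blast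
  qed
  consider "card T > K" | "card T = K" | "card T < K" by linarith
  then show ?thesis
  proof cases
    case 1
    obtain w q' where w: "\<forall>y. y \<notin> T \<longrightarrow> w y = 0" "\<exists>y\<in>T. w y \<noteq> 0" "\<forall>D\<in>P. sum w D = 0"
      "\<forall>D\<in>P. (\<Sum>y\<in>D. w y *\<^sub>R y) = q'"
      using keyS[OF p S fin Pne TS] 1 K_def by blast
    then show ?thesis using noW[OF w(3) w(4) w(1)] by blast
  next
    case 2
    have "card T < card S" using 2 big K_def by simp
    then have "S - T \<noteq> {}" using TS by auto
    then obtain y where y: "y \<in> S" "y \<notin> T" by blast
    define U where "U = insert y T"
    have US: "U \<subseteq> S" using y TS U_def by blast
    have cU: "card U = K + 1" using 2 y fT U_def by simp
    obtain w q' where w: "\<forall>y. y \<notin> U \<longrightarrow> w y = 0" "\<exists>y\<in>U. w y \<noteq> 0" "\<forall>D\<in>P. sum w D = 0"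
      "\<forall>D\<in>P. (\<Sum>y\<in>D. w y *\<^sub>R y) = q'"
      using keyS[OF p S fin Pne US] cU K_def by auto
    have wy: "w y \<noteq> 0"
    proof
      assume wy0: "w y = 0"
      have "\<forall>y'. y' \<notin> T \<longrightarrow> w y' = 0"
      proof (intro allI impI)
        fix y' assume "y' \<notin> T"
        then show "w y' = 0" using w(1) wy0 U_def by (cases "y' = y") auto
      qed
      then have "\<forall>y'. w y' = 0" using noW[OF w(3) w(4)] by blast
      then show False using w(2) by blast
    qed
    obtain w' q'' where w': "\<forall>D\<in>P. sum w' D = 0" "\<forall>D\<in>P. (\<Sum>y\<in>D. w' y *\<^sub>R y) = q''" "w' y > 0"
      "\<forall>y. w y = 0 \<longrightarrow> w' y = 0"
      using normalize[OF w(3) w(4) wy] by blast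
    have sup': "\<forall>y. y \<notin> U \<longrightarrow> w' y = 0" using w(1) w'(4) by blast
    obtain z l' q3 where z: "z \<in> U" "w' z < 0" "feas P l' q3" "l' z = 0"
      using reduce_supp[OF p S f w'(1) w'(2) y(1) w'(3) sup'] by blast
    have zT: "z \<in> T" using z(1,2) w'(3) U_def by auto
    have zS: "z \<in> S" using zT TS by blast
    have remz: "rem z" unfolding rem_def using feas_rem[OF p S z(3) zS z(4)] by blast
    define R where "R = insert z (S - T)"
    have "card R = card (S - T) + 1" unfolding R_def using zT S by simp
    also have "card (S - T) = card S - K" using 2 TS fT by (simp add: card_Diff_subset)
    finally have "card R \<ge> card S + 1 - K" by simp
    moreover have "R \<subseteq> S" unfolding R_def using zS by blast
    moreover have "\<forall>x\<in>R. rem x" unfolding R_def using remz remST by blast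
    ultimately show ?thesis unfolding rem_def K_def by blast
  next
    case 3
    have "card (S - T) = card S - card T" using TS fT by (simp add: card_Diff_subset)
    then have "card (S - T) \<ge> card S + 1 - K" using 3 by simp
    moreover have "\<forall>x\<in>S - T. rem x" using remST by blast
    ultimately show ?thesis unfolding rem_def K_def by (intro exI[of _ "S - T"]) blast
  qed
qed

theorem theorem1p5:
  fixes S :: "(real^'d) set" and r n :: nat and P :: "(real^'d) set set"
  assumes "r \<ge> 1"
    and "finite S" and "card S = n"
    and "n > Tv CARD('d) r"
    and "tverberg_partition S r P"
  shows "(n + 1 - Tv CARD('d) r) * (r - 1) \<le> tverberg_graph_degree S r P
         \<and> tverberg_graph_degree S r P \<le> n * (r - 1)"
proof -
  have r1: "r \<ge> 1" and S: "finite S" and cS: "card S = n" and big0: "n > Tv CARD('d) r"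
    and tv: "tverberg_partition S r P" using assms by auto
  have p: "partition_on S P" and fin: "finite P" and cP: "card P = r"
    using tv unfolding tverberg_partition_def partition_r_def by auto
  have "(\<Inter>B\<in>P. convex hull B) \<noteq> {}" using tv unfolding tverberg_partition_def by auto
  then obtain pt where pt: "\<forall>D\<in>P. pt \<in> convex hull D" by blast
  have Pne: "P \<noteq> {}" using cP r1 by auto
  have TvE: "Tv CARD('d) r = (card P - 1) * (CARD('d) + 1) + 1" unfolding Tv_def cP by simp
  define nb where "nb = {P'. tverberg_partition S r P' \<and> partition_distance S P P' = 1}"
  have deg: "tverberg_graph_degree S r P = card nb" unfolding tverberg_graph_degree_def nb_def ..
  define G where "G = (\<lambda>(x, C). mv S P x C)"
  have cPm: "card (P - {blk P x}) = r - 1" if "x \<in> S" for x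
    using blk[OF p that] fin cP by (simp add: card_Diff_singleton)
  have sub1: "nb \<subseteq> G ` (SIGMA x:S. P - {blk P x})"
  proof
    fix P' assume "P' \<in> nb"
    then have tv': "tverberg_partition S r P'" and d1: "partition_distance S P P' = 1"
      unfolding nb_def by auto
    have p': "partition_on S P'" and cP': "card P' = r"
      using tv' unfolding tverberg_partition_def partition_r_def by auto
    obtain x where x: "x \<in> S" and eq: "restrict_partition P (S - {x}) = restrict_partition P' (S - {x})"
      and ne: "restrict_partition P S \<noteq> restrict_partition P' S"
      using dist1_inv[OF S d1] by blast
    have ne': "P' \<noteq> P" using ne restr_S[OF p] restr_S[OF p'] by auto
    obtain C where C: "C \<in> P - {blk P x}" "P' = mv S P x C"
      using upper_struct[OF p p' fin _ x eq ne'] cP cP' by auto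
    then show "P' \<in> G ` (SIGMA x:S. P - {blk P x})" unfolding G_def using x by force
  qed
  have finSig: "finite (SIGMA x:S. P - {blk P x})" using S fin by auto
  have cSig: "card (SIGMA x:S. P - {blk P x}) = n * (r - 1)"
  proof -
    have "card (SIGMA x:S. P - {blk P x}) = (\<Sum>x\<in>S. card (P - {blk P x}))"
      using S fin by (simp add: card_SigmaI)
    also have "\<dots> = (\<Sum>x\<in>S. r - 1)" by (rule sum.cong) (simp_all add: cPm)
    finally show ?thesis using cS by simp
  qed
  have finnb: "finite nb" using sub1 finSig by (meson finite_imageI finite_subset)
  have up: "card nb \<le> n * (r - 1)"
  proof -
    have "card nb \<le> card (G ` (SIGMA x:S. P - {blk P x}))" using sub1 finSig by (intro card_mono) auto
    also have "\<dots> \<le> card (SIGMA x:S. P - {blk P x})" using finSig by (rule card_image_le)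
    finally show ?thesis using cSig by simp
  qed
  have bigK: "card S > (card P - 1) * (CARD('d) + 1) + 1" using big0 cS TvE by simp
  obtain R where RS: "R \<subseteq> S" and cR: "card R \<ge> card S + 1 - ((card P - 1) * (CARD('d) + 1) + 1)"
    and Rrem: "\<forall>x\<in>R. \<exists>pp. pp \<in> convex hull (blk P x - {x}) \<and> (\<forall>D\<in>P. pp \<in> convex hull D)"
    using removable_count[OF p S fin Pne pt bigK] by blast
  have fR: "finite R" using RS S by (rule finite_subset)
  have Bne: "blk P x - {x} \<noteq> {}" if "x \<in> R" for x
    using Rrem that by (metis convex_hull_empty empty_iff)
  have sub2: "G ` (SIGMA x:R. P - {blk P x}) \<subseteq> nb"
  proof
    fix F assume "F \<in> G ` (SIGMA x:R. P - {blk P x})"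
    then obtain x C where xR: "x \<in> R" and C: "C \<in> P - {blk P x}" and F: "F = mv S P x C"
      unfolding G_def by auto
    have x: "x \<in> S" using xR RS by blast
    obtain pp where pp: "pp \<in> convex hull (blk P x - {x})" "\<forall>D\<in>P. pp \<in> convex hull D"
      using Rrem xR by blast
    note g = mv_good[OF p fin x Bne[OF xR] C]
    have Fform: "F = insert (insert x C) (insert (blk P x - {x}) (P - {blk P x, C}))"
      using mv_form[OF p x Bne[OF xR] C] F by simp
    have finF: "finite F" using Fform fin by simp
    have hull: "\<forall>D\<in>F. pp \<in> convex hull D"
    proof
      fix D assume "D \<in> F"
      then consider "D = insert x C" | "D = blk P x - {x}" | "D \<in> P - {blk P x, C}"
        unfolding Fform by blast
      then show "pp \<in> convex hull D"
      proof cases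
        case 1
        have "pp \<in> convex hull C" using pp(2) C by blast
        moreover have "convex hull C \<subseteq> convex hull D" using 1 by (intro hull_mono) blast
        ultimately show ?thesis by blast
      next
        case 2 then show ?thesis using pp(1) by simp
      next
        case 3 then show ?thesis using pp(2) by blast
      qed
    qed
    have tvF: "tverberg_partition S r F"
      unfolding tverberg_partition_def partition_r_def
      using g(1,2) F finF cP hull by auto
    have "partition_distance S P F = 1"
    proof (rule dist1[OF S x])
      show "restrict_partition P (S - {x}) = restrict_partition F (S - {x})" using g(3) F by simp
      show "restrict_partition P S \<noteq> restrict_partition F S"
        using restr_S[OF p] restr_S[of S F] g(1,4) F by auto
    qed
    then show "F \<in> nb" unfolding nb_def using tvF by simp
  qed
  have inj: "inj_on G (SIGMA x:R. P - {blk P x})"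
  proof (rule inj_onI)
    fix a b assume a: "a \<in> (SIGMA x:R. P - {blk P x})" and b: "b \<in> (SIGMA x:R. P - {blk P x})"
      and e: "G a = G b"
    obtain x C where aa: "a = (x, C)" "x \<in> R" "C \<in> P - {blk P x}" using a by auto
    obtain x' C' where bb: "b = (x', C')" "x' \<in> R" "C' \<in> P - {blk P x'}" using b by auto
    have "x = x' \<and> C = C'"
      by (rule mv_inj[OF p fin _ Bne[OF aa(2)] aa(3) _ Bne[OF bb(2)] bb(3)])
         (use aa bb e RS G_def in auto)
    then show "a = b" using aa bb by simp
  qed
  have cSig2: "card (SIGMA x:R. P - {blk P x}) = card R * (r - 1)"
  proof -
    have "card (SIGMA x:R. P - {blk P x}) = (\<Sum>x\<in>R. card (P - {blk P x}))"
      using fR fin by (simp add: card_SigmaI)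
    also have "\<dots> = (\<Sum>x\<in>R. r - 1)" by (rule sum.cong) (use RS cPm in auto)
    finally show ?thesis by simp
  qed
  have low: "card R * (r - 1) \<le> card nb"
  proof -
    have "card R * (r - 1) = card (G ` (SIGMA x:R. P - {blk P x}))"
      using card_image[OF inj] cSig2 by simp
    also have "\<dots> \<le> card nb" using sub2 finnb by (rule card_mono[rotated])
    finally show ?thesis .
  qed
  have "(n + 1 - Tv CARD('d) r) * (r - 1) \<le> card R * (r - 1)"
    using cR cS TvE by (intro mult_right_mono) auto
  then have "(n + 1 - Tv CARD('d) r) * (r - 1) \<le> card nb" using low by (rule le_trans)
  then show ?thesis using up deg by simp
qed

end
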